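(* Let $H$ be a capacitated hypergraph with $n$ vertices, let $\alpha\ge0$, and let $H'$ be an $\alpha$-contraction of $H$ (with respect to some MA-ordering). Then $\text{sum-deg}(H')\le 2\alpha n$.
   Context: A hypergraph $H=(V,E)$ has finite vertex set $V$, a finite multiset $E$ of edges (subsets of $V$) and capacities $c:E\to\mathbb{R}_{\ge0}$; $\text{sum-deg}(H)=\sum_{e\in E}|e|c(e)$. For subsets $A_1,\ldots,A_k$, $d(A_1,\ldots,A_k)$ is the total capacity of edges meeting every $A_i$ (a vertex $v$ stands for $\{v\}$). For an ordering $v_1,\ldots,v_n$, $V_i=\{v_1,\ldots,v_i\}$; it is an MA-ordering if $d(V_{i-1},v_i)\ge d(V_{i-1},v_j)$ for all $1\le i<j\le n$. Given an MA-ordering and $\alpha\ge0$, a set of consecutive vertices $v_a,\ldots,v_b$ ($a\le b$) is $\alpha$-tight if $d(V_i,v_{i+1})\ge\alpha$ for all $a\le i<b$. The maximal $\alpha$-tight sets partition $V$; the $\alpha$-contraction contracts each maximal $\alpha$-tight set into a single vertex and discards edges that become singletons, keeping capacities. *)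

theory Defs
  imports Complex_Main
begin

text \<open>A capacitated hypergraph: finite vertex set V, a finite index set I of edges
  (indices allow a multiset of edges), the edge map ed and capacities c.\<close>

definition hypergraph :: "'v set \<Rightarrow> 'e set \<Rightarrow> ('e \<Rightarrow> 'v set) \<Rightarrow> ('e \<Rightarrow> real) \<Rightarrow> bool" where
  "hypergraph V I ed c \<longleftrightarrow> finite V \<and> finite I \<and> (\<forall>e\<in>I. ed e \<subseteq> V) \<and> (\<forall>e\<in>I. 0 \<le> c e)"

definition sum_deg :: "'e set \<Rightarrow> ('e \<Rightarrow> 'v set) \<Rightarrow> ('e \<Rightarrow> real) \<Rightarrow> real" where
  "sum_deg I ed c = (\<Sum>e\<in>I. real (card (ed e)) * c e)"

definition dd :: "'e set \<Rightarrow> ('e \<Rightarrow> 'v set) \<Rightarrow> ('e \<Rightarrow> real) \<Rightarrow> 'v set list \<Rightarrow> real" where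
  "dd I ed c As = (\<Sum>e\<in>{e\<in>I. \<forall>A\<in>set As. ed e \<inter> A \<noteq> {}}. c e)"

text \<open>Orderings are lists vs (0-indexed); vs ! i is v_{i+1} and set (take i vs) is V_i.\<close>
definition ordering_of :: "'v set \<Rightarrow> 'v list \<Rightarrow> bool" where
  "ordering_of V vs \<longleftrightarrow> distinct vs \<and> set vs = V"

definition MA_ordering :: "'v set \<Rightarrow> 'e set \<Rightarrow> ('e \<Rightarrow> 'v set) \<Rightarrow> ('e \<Rightarrow> real) \<Rightarrow> 'v list \<Rightarrow> bool" where
  "MA_ordering V I ed c vs \<longleftrightarrow> ordering_of V vs \<and>
     (\<forall>i j. i < j \<and> j < length vs \<longrightarrow>
        dd I ed c [set (take i vs), {vs ! j}] \<le> dd I ed c [set (take i vs), {vs ! i}])"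

text \<open>The consecutive vertices at (0-based) positions p..q are alpha-tight iff
  d(V_i, v_{i+1}) \<ge> alpha for all 1-based a \<le> i < b, i.e. for 0-based p < i \<le> q:
  d(set (take i vs), vs ! i) \<ge> alpha.\<close>
definition alpha_tight :: "'e set \<Rightarrow> ('e \<Rightarrow> 'v set) \<Rightarrow> ('e \<Rightarrow> real) \<Rightarrow> 'v list \<Rightarrow> real \<Rightarrow> 'v set \<Rightarrow> bool" where
  "alpha_tight I ed c vs \<alpha> S \<longleftrightarrow> (\<exists>p q. p \<le> q \<and> q < length vs \<and>
      S = {vs ! i | i. p \<le> i \<and> i \<le> q} \<and>
      (\<forall>i. p < i \<and> i \<le> q \<longrightarrow> \<alpha> \<le> dd I ed c [set (take i vs), {vs ! i}]))"

definition max_alpha_tight :: "'e set \<Rightarrow> ('e \<Rightarrow> 'v set) \<Rightarrow> ('e \<Rightarrow> real) \<Rightarrow> 'v list \<Rightarrow> real \<Rightarrow> 'v set \<Rightarrow> bool" where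
  "max_alpha_tight I ed c vs \<alpha> S \<longleftrightarrow> alpha_tight I ed c vs \<alpha> S \<and>
      (\<forall>T. alpha_tight I ed c vs \<alpha> T \<and> S \<subseteq> T \<longrightarrow> T = S)"

definition contr_map :: "'e set \<Rightarrow> ('e \<Rightarrow> 'v set) \<Rightarrow> ('e \<Rightarrow> real) \<Rightarrow> 'v list \<Rightarrow> real \<Rightarrow> 'v \<Rightarrow> 'v set" where
  "contr_map I ed c vs \<alpha> v = (THE S. max_alpha_tight I ed c vs \<alpha> S \<and> v \<in> S)"

text \<open>The alpha-contraction H': vertices are the maximal alpha-tight sets, the edges are the
  images of the edges of H (same indices, same capacities), discarding those that become singletons.\<close>
definition contr_vertices where
  "contr_vertices I ed c vs \<alpha> = {S. max_alpha_tight I ed c vs \<alpha> S}"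

definition contr_edge_idx :: "'e set \<Rightarrow> ('e \<Rightarrow> 'v set) \<Rightarrow> ('e \<Rightarrow> real) \<Rightarrow> 'v list \<Rightarrow> real \<Rightarrow> 'e set" where
  "contr_edge_idx I ed c vs \<alpha> = {e\<in>I. card (contr_map I ed c vs \<alpha> ` ed e) \<noteq> 1}"

definition contr_edge :: "'e set \<Rightarrow> ('e \<Rightarrow> 'v set) \<Rightarrow> ('e \<Rightarrow> real) \<Rightarrow> 'v list \<Rightarrow> real \<Rightarrow> 'e \<Rightarrow> 'v set set" where
  "contr_edge I ed c vs \<alpha> e = contr_map I ed c vs \<alpha> ` ed e"

end

theory Submission
  imports Defs
begin

definition tgt :: "'e set \<Rightarrow> ('e \<Rightarrow> 'v set) \<Rightarrow> ('e \<Rightarrow> real) \<Rightarrow> 'v list \<Rightarrow> real \<Rightarrow> nat \<Rightarrow> nat \<Rightarrow> bool" where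
  "tgt I ed c vs \<alpha> p q \<longleftrightarrow> p \<le> q \<and> q < length vs \<and>
      (\<forall>i. p < i \<and> i \<le> q \<longrightarrow> \<alpha> \<le> dd I ed c [set (take i vs), {vs ! i}])"

definition iv :: "'v list \<Rightarrow> nat \<Rightarrow> nat \<Rightarrow> 'v set" where
  "iv vs p q = {vs ! i | i. p \<le> i \<and> i \<le> q}"

lemma at_iff: "alpha_tight I ed c vs \<alpha> S \<longleftrightarrow> (\<exists>p q. tgt I ed c vs \<alpha> p q \<and> S = iv vs p q)"
  unfolding alpha_tight_def tgt_def iv_def by blast

lemma mem_iv:
  assumes "distinct vs" "x < length vs" "q < length vs"
  shows "vs ! x \<in> iv vs p q \<longleftrightarrow> p \<le> x \<and> x \<le> q"
proof
  assume "vs ! x \<in> iv vs p q"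
  then obtain i where i: "p \<le> i" "i \<le> q" "vs ! x = vs ! i" unfolding iv_def by blast
  have "i < length vs" using i assms(3) by simp
  then have "i = x" using assms(1,2) i(3) nth_eq_iff_index_eq by metis
  then show "p \<le> x \<and> x \<le> q" using i by simp
qed (auto simp: iv_def)

lemma iv_mono: "p' \<le> p \<Longrightarrow> q \<le> q' \<Longrightarrow> iv vs p q \<subseteq> iv vs p' q'"
  unfolding iv_def by force

lemma tgt_union:
  assumes "tgt I ed c vs \<alpha> p1 q1" "tgt I ed c vs \<alpha> p2 q2" "p1 \<le> x" "x \<le> q1" "p2 \<le> x" "x \<le> q2"
  shows "tgt I ed c vs \<alpha> (min p1 p2) (max q1 q2)"
  unfolding tgt_def
proof (intro conjI allI impI)
  show "min p1 p2 \<le> max q1 q2" using assms by simp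
  show "max q1 q2 < length vs" using assms by (simp add: tgt_def)
  fix i assume h: "min p1 p2 < i \<and> i \<le> max q1 q2"
  then have "(p1 < i \<and> i \<le> q1) \<or> (p2 < i \<and> i \<le> q2)" using assms by linarith
  then show "\<alpha> \<le> dd I ed c [set (take i vs), {vs ! i}]" using assms(1,2) unfolding tgt_def by blast
qed

lemma tgt_lt: "tgt I ed c vs \<alpha> p q \<Longrightarrow> q < length vs" by (simp add: tgt_def)

lemma max_unique:
  assumes d: "distinct vs" and x: "x < length vs"
    and m1: "max_alpha_tight I ed c vs \<alpha> S1" "vs ! x \<in> S1"
    and m2: "max_alpha_tight I ed c vs \<alpha> S2" "vs ! x \<in> S2"
  shows "S1 = S2"
proof -
  obtain p1 q1 where t1: "tgt I ed c vs \<alpha> p1 q1" "S1 = iv vs p1 q1"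
    using m1 unfolding max_alpha_tight_def at_iff by blast
  obtain p2 q2 where t2: "tgt I ed c vs \<alpha> p2 q2" "S2 = iv vs p2 q2"
    using m2 unfolding max_alpha_tight_def at_iff by blast
  have r1: "p1 \<le> x" "x \<le> q1" using mem_iv[OF d x tgt_lt[OF t1(1)]] m1(2) t1(2) by auto
  have r2: "p2 \<le> x" "x \<le> q2" using mem_iv[OF d x tgt_lt[OF t2(1)]] m2(2) t2(2) by auto
  define U where "U = iv vs (min p1 p2) (max q1 q2)"
  have tu: "alpha_tight I ed c vs \<alpha> U" unfolding at_iff U_def
    using tgt_union[OF t1(1) t2(1) r1 r2] by blast
  have "S1 \<subseteq> U" "S2 \<subseteq> U" unfolding U_def t1(2) t2(2) by (simp_all add: iv_mono)
  then have "U = S1" "U = S2" using tu m1(1) m2(1) unfolding max_alpha_tight_def by auto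
  then show ?thesis by simp
qed

lemma max_exists:
  assumes d: "distinct vs" and x: "x < length vs"
  shows "\<exists>S. max_alpha_tight I ed c vs \<alpha> S \<and> vs ! x \<in> S"
proof -
  define P where "P = {(p, q). tgt I ed c vs \<alpha> p q \<and> p \<le> x \<and> x \<le> q}"
  have fin: "finite P"
    by (rule finite_subset[of _ "{..<length vs} \<times> {..<length vs}"]) (auto simp: P_def tgt_def)
  have xx: "(x, x) \<in> P" using x by (simp add: P_def tgt_def)
  define P0 where "P0 = Min (fst ` P)"
  define Q0 where "Q0 = Max (snd ` P)"
  have "P0 \<in> fst ` P" unfolding P0_def using fin xx by (intro Min_in) auto
  then obtain q1 where pq1: "(P0, q1) \<in> P" by force
  have "Q0 \<in> snd ` P" unfolding Q0_def using fin xx by (intro Max_in) auto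
  then obtain p2 where pq2: "(p2, Q0) \<in> P" by force
  have P0le: "\<And>p q. (p, q) \<in> P \<Longrightarrow> P0 \<le> p" unfolding P0_def using fin
    by (metis Min_le finite_imageI fst_conv image_eqI)
  have Q0ge: "\<And>p q. (p, q) \<in> P \<Longrightarrow> q \<le> Q0" unfolding Q0_def using fin
    by (metis Max_ge finite_imageI snd_conv image_eqI)
  have t1: "tgt I ed c vs \<alpha> P0 q1" "P0 \<le> x" "x \<le> q1" using pq1 by (auto simp: P_def)
  have t2: "tgt I ed c vs \<alpha> p2 Q0" "p2 \<le> x" "x \<le> Q0" using pq2 by (auto simp: P_def)
  have "tgt I ed c vs \<alpha> (min P0 p2) (max q1 Q0)" using tgt_union[OF t1(1) t2(1) t1(2,3) t2(2,3)] .
  moreover have "min P0 p2 = P0" "max q1 Q0 = Q0" using P0le[OF pq2] Q0ge[OF pq1] by auto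
  ultimately have tQ: "tgt I ed c vs \<alpha> P0 Q0" by simp
  define S where "S = iv vs P0 Q0"
  have xS: "vs ! x \<in> S" unfolding S_def using mem_iv[OF d x tgt_lt[OF tQ]] t1 t2 by auto
  have "max_alpha_tight I ed c vs \<alpha> S"
    unfolding max_alpha_tight_def
  proof (intro conjI allI impI)
    show "alpha_tight I ed c vs \<alpha> S" unfolding at_iff S_def using tQ by blast
    fix T assume h: "alpha_tight I ed c vs \<alpha> T \<and> S \<subseteq> T"
    then obtain p q where tT: "tgt I ed c vs \<alpha> p q" "T = iv vs p q" unfolding at_iff by blast
    have "vs ! x \<in> T" using h xS by blast
    then have "p \<le> x" "x \<le> q" using mem_iv[OF d x tgt_lt[OF tT(1)]] tT(2) by auto
    then have "(p, q) \<in> P" using tT by (simp add: P_def)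
    then have "T \<subseteq> S" unfolding tT(2) S_def using P0le Q0ge by (intro iv_mono) auto
    then show "T = S" using h by blast
  qed
  then show ?thesis using xS by blast
qed

lemma contr_map_char:
  assumes d: "distinct vs" and x: "x < length vs"
    and m: "max_alpha_tight I ed c vs \<alpha> S" "vs ! x \<in> S"
  shows "contr_map I ed c vs \<alpha> (vs ! x) = S"
  unfolding contr_map_def
proof (rule the_equality)
  show "max_alpha_tight I ed c vs \<alpha> S \<and> vs ! x \<in> S" using m by simp
  fix T assume "max_alpha_tight I ed c vs \<alpha> T \<and> vs ! x \<in> T"
  then show "T = S" using max_unique[OF d x, of I ed c \<alpha> T S] m by simp
qed

lemma key:
  assumes d: "distinct vs" and ku: "k < u" "u < length vs"
    and br: "\<forall>i. k < i \<and> i \<le> u \<longrightarrow> \<alpha> \<le> dd I ed c [set (take i vs), {vs ! i}]"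
  shows "contr_map I ed c vs \<alpha> (vs ! k) = contr_map I ed c vs \<alpha> (vs ! u)"
proof -
  have k: "k < length vs" using ku by simp
  obtain M where M: "max_alpha_tight I ed c vs \<alpha> M" "vs ! k \<in> M" using max_exists[OF d k] by blast
  obtain p q where t: "tgt I ed c vs \<alpha> p q" "M = iv vs p q"
    using M unfolding max_alpha_tight_def at_iff by blast
  have r: "p \<le> k" "k \<le> q" using mem_iv[OF d k tgt_lt[OF t(1)]] M(2) t(2) by auto
  have tk: "tgt I ed c vs \<alpha> k u" using ku br by (simp add: tgt_def)
  define U where "U = iv vs (min p k) (max q u)"
  have tU: "tgt I ed c vs \<alpha> (min p k) (max q u)" using tgt_union[OF t(1) tk r] ku by simp
  have "alpha_tight I ed c vs \<alpha> U" unfolding at_iff U_def using tU by blast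
  moreover have "M \<subseteq> U" unfolding U_def t(2) by (simp add: iv_mono)
  ultimately have "U = M" using M(1) unfolding max_alpha_tight_def by auto
  moreover have "vs ! u \<in> U" unfolding U_def using mem_iv[OF d ku(2) tgt_lt[OF tU]] r ku by simp
  ultimately have "vs ! u \<in> M" by simp
  then show ?thesis using contr_map_char[OF d k M] contr_map_char[OF d ku(2) M(1)] by simp
qed

theorem mainTheorem18:
  fixes V :: "'v set" and I :: "'e set" and ed :: "'e \<Rightarrow> 'v set" and c :: "'e \<Rightarrow> real"
    and vs :: "'v list" and \<alpha> :: real
  assumes "hypergraph V I ed c"
    and "MA_ordering V I ed c vs"
    and "0 \<le> \<alpha>"
  shows "sum_deg (contr_edge_idx I ed c vs \<alpha>) (contr_edge I ed c vs \<alpha>) c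
           \<le> 2 * \<alpha> * real (card V)"
proof -
  define n where "n = length vs"
  have d: "distinct vs" and sV: "set vs = V" using assms(2) by (auto simp: MA_ordering_def ordering_of_def)
  have finI: "finite I" and edV: "\<And>e. e \<in> I \<Longrightarrow> ed e \<subseteq> V" and cpos: "\<And>e. e \<in> I \<Longrightarrow> 0 \<le> c e"
    using assms(1) by (auto simp: hypergraph_def)
  have MA: "\<And>i j. i < j \<Longrightarrow> j < n \<Longrightarrow>
        dd I ed c [set (take i vs), {vs ! j}] \<le> dd I ed c [set (take i vs), {vs ! i}]"
    using assms(2) unfolding MA_ordering_def n_def by blast
  define f where "f u = contr_map I ed c vs \<alpha> (vs ! u)" for u
  define K where "K e = {u. u < n \<and> vs ! u \<in> ed e}" for e
  define Pe where "Pe e u \<longleftrightarrow> u < n \<and> vs ! u \<in> ed e \<and> (\<exists>k<u. vs ! k \<in> ed e \<and> f k \<noteq> f u)" for e u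
  define T where "T e = {u\<in>{..<n}. Pe e u}" for e
  have finK: "finite (K e)" for e unfolding K_def by auto
  have finT: "finite (T e)" for e unfolding T_def by auto
  have img: "contr_edge I ed c vs \<alpha> e = f ` K e" if "e \<in> I" for e
  proof
    show "contr_edge I ed c vs \<alpha> e \<subseteq> f ` K e"
    proof
      fix y assume "y \<in> contr_edge I ed c vs \<alpha> e"
      then obtain v where v: "v \<in> ed e" "y = contr_map I ed c vs \<alpha> v" unfolding contr_edge_def by blast
      then have "v \<in> set vs" using edV[OF that] sV by blast
      then obtain u where "u < n" "v = vs ! u" unfolding n_def by (metis in_set_conv_nth)
      then show "y \<in> f ` K e" using v unfolding K_def f_def by blast
    qed
    show "f ` K e \<subseteq> contr_edge I ed c vs \<alpha> e" unfolding K_def f_def contr_edge_def by auto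
  qed
  have step2: "real (card (f ` K e)) \<le> 2 * real (card (T e))" if "card (f ` K e) \<noteq> 1" for e
  proof (cases "K e = {}")
    case True then show ?thesis by simp
  next
    case False
    define m where "m = Min (K e)"
    have mK: "m \<in> K e" unfolding m_def using finK False by (rule Min_in)
    have "f ` K e \<subseteq> insert (f m) (f ` T e)"
    proof
      fix y assume "y \<in> f ` K e"
      then obtain u where u: "u \<in> K e" "y = f u" by blast
      show "y \<in> insert (f m) (f ` T e)"
      proof (cases "f u = f m")
        case True then show ?thesis using u by simp
      next
        case False
        have "m \<le> u" unfolding m_def using finK u(1) by simp
        then have "m < u" using False by (cases "m = u") auto
        then have "u \<in> T e" using u(1) mK False unfolding T_def Pe_def K_def by auto
        then show ?thesis using u by blast
      qed
    qed
    then have "card (f ` K e) \<le> card (insert (f m) (f ` T e))"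
      by (intro card_mono) (auto simp: finT)
    also have "\<dots> \<le> Suc (card (f ` T e))" by (simp add: card_insert_le_m1 card_insert_if)
    also have "\<dots> \<le> Suc (card (T e))" using card_image_le[OF finT] by simp
    finally have a: "card (f ` K e) \<le> Suc (card (T e))" .
    have "card (f ` K e) \<noteq> 0" using False finK by simp
    then show ?thesis using a that by linarith
  qed
  have step5: "(\<Sum>e\<in>I. if Pe e u then c e else 0) \<le> \<alpha>" if un: "u < n" for u
  proof (cases "\<exists>e\<in>I. Pe e u")
    case False then show ?thesis using assms(3) by simp
  next
    case True
    then obtain e0 k0 where "k0 < u" "f k0 \<noteq> f u" unfolding Pe_def by blast
    then obtain i0 where i0: "k0 < i0" "i0 \<le> u" "dd I ed c [set (take i0 vs), {vs ! i0}] < \<alpha>"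
      using key[OF d, of k0 u \<alpha> I ed c] un unfolding f_def n_def by force
    define B where "B = {i. 0 < i \<and> i \<le> u \<and> dd I ed c [set (take i vs), {vs ! i}] < \<alpha>}"
    have finB: "finite B" unfolding B_def by (rule finite_subset[of _ "{..u}"]) auto
    have "i0 \<in> B" using i0 unfolding B_def by simp
    define s where "s = Max B"
    have sB: "s \<in> B" unfolding s_def using finB \<open>i0 \<in> B\<close> by (intro Max_in) auto
    have sle: "\<And>i. i \<in> B \<Longrightarrow> i \<le> s" unfolding s_def using finB by simp
    have sub: "{e\<in>I. Pe e u} \<subseteq> {e\<in>I. \<forall>A\<in>set [set (take s vs), {vs ! u}]. ed e \<inter> A \<noteq> {}}"
    proof
      fix e assume "e \<in> {e\<in>I. Pe e u}"
      then have e: "e \<in> I" "vs ! u \<in> ed e" and "\<exists>k<u. vs ! k \<in> ed e \<and> f k \<noteq> f u"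
        unfolding Pe_def by auto
      then obtain k where k: "k < u" "vs ! k \<in> ed e" "f k \<noteq> f u" by blast
      then obtain i where i: "k < i" "i \<le> u" "dd I ed c [set (take i vs), {vs ! i}] < \<alpha>"
        using key[OF d, of k u \<alpha> I ed c] un unfolding f_def n_def by force
      then have "i \<in> B" unfolding B_def by simp
      then have "k < s" using sle i by fastforce
      moreover have "s \<le> n" using sB un unfolding B_def by simp
      ultimately have "vs ! k \<in> set (take s vs)"
        by (metis in_set_conv_nth length_take min.absorb2 n_def nth_take)
      then show "e \<in> {e\<in>I. \<forall>A\<in>set [set (take s vs), {vs ! u}]. ed e \<inter> A \<noteq> {}}"
        using e k by auto
    qed
    have "(\<Sum>e\<in>I. if Pe e u then c e else 0) = (\<Sum>e\<in>{e\<in>I. Pe e u}. c e)"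
      by (simp add: sum.inter_filter[OF finI])
    also have "\<dots> \<le> dd I ed c [set (take s vs), {vs ! u}]"
      unfolding dd_def using sub finI cpos by (intro sum_mono2) auto
    also have "\<dots> \<le> dd I ed c [set (take s vs), {vs ! s}]"
    proof (cases "s = u")
      case True then show ?thesis by simp
    next
      case False
      then have "s < u" using sB unfolding B_def by simp
      then show ?thesis using MA un by blast
    qed
    also have "\<dots> < \<alpha>" using sB unfolding B_def by simp
    finally show ?thesis by simp
  qed
  have "sum_deg (contr_edge_idx I ed c vs \<alpha>) (contr_edge I ed c vs \<alpha>) c
      = (\<Sum>e\<in>contr_edge_idx I ed c vs \<alpha>. real (card (f ` K e)) * c e)"
    unfolding sum_deg_def contr_edge_idx_def by (intro sum.cong) (auto simp: img)
  also have "\<dots> \<le> (\<Sum>e\<in>contr_edge_idx I ed c vs \<alpha>. 2 * real (card (T e)) * c e)"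
  proof (intro sum_mono)
    fix e assume e: "e \<in> contr_edge_idx I ed c vs \<alpha>"
    then have "e \<in> I" "card (f ` K e) \<noteq> 1"
      unfolding contr_edge_idx_def using img[of e] by (auto simp: contr_edge_def)
    then show "real (card (f ` K e)) * c e \<le> 2 * real (card (T e)) * c e"
      using step2 cpos by (intro mult_right_mono) auto
  qed
  also have "\<dots> \<le> (\<Sum>e\<in>I. 2 * real (card (T e)) * c e)"
    using finI cpos by (intro sum_mono2) (auto simp: contr_edge_idx_def)
  also have "\<dots> = 2 * (\<Sum>e\<in>I. \<Sum>u<n. if Pe e u then c e else 0)"
  proof -
    have "real (card (T e)) * c e = (\<Sum>u<n. if Pe e u then c e else 0)" for e
    proof -
      have "real (card (T e)) * c e = (\<Sum>u\<in>T e. c e)" by simp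
      also have "\<dots> = (\<Sum>u<n. if Pe e u then c e else 0)"
        unfolding T_def by (rule sum.inter_filter) simp
      finally show ?thesis .
    qed
    then show ?thesis by (simp add: sum_distrib_left mult.assoc)
  qed
  also have "\<dots> = 2 * (\<Sum>u<n. \<Sum>e\<in>I. if Pe e u then c e else 0)"
    by (simp add: sum.swap[of _ I])
  also have "\<dots> \<le> 2 * (\<Sum>u<n. \<alpha>)"
    using step5 by (intro mult_left_mono sum_mono) auto
  also have "\<dots> = 2 * \<alpha> * real (card V)"
    using distinct_card[OF d] sV unfolding n_def by simp
  finally show ?thesis .
qed

end
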